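(* Let $\lambda_a,\lambda_b\in\{1,2\}$ and let $u,t,v,w$ be integers such that: $u,t,vw$ are, in that order, three consecutive terms of $\langle u,t\rangle_{S_{\lambda_a,\lambda_b}}=\langle t,vw\rangle_{S_{3-\lambda_b,\lambda_a}}$, i.e. $(u,t)$ satisfies $S_{\lambda_a,\lambda_b}$ and $u\cdot vw=t^3+t^{\lambda_a}+1$; $v,t,uw$ are, in that order, three consecutive terms of a second 4-chain $\langle v,t\rangle_{S_{\lambda_a,\lambda_b}}=\langle t,uw\rangle_{S_{3-\lambda_b,\lambda_a}}$, i.e. $(v,t)$ satisfies $S_{\lambda_a,\lambda_b}$; $|t|$ is a prime; and $t\nmid(u-v)$. Then $(-w,t)$ satisfies $S_{\lambda_a,\lambda_b}$, so $-w,t,-uv$ are, in that order, three consecutive terms of a third 4-chain $\langle -w,t\rangle_{S_{\lambda_a,\lambda_b}}=\langle t,-uv\rangle_{S_{3-\lambda_b,\lambda_a}}$.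
   Context: For $\lambda_a,\lambda_b\in\{1,2\}$, a pair of integers $(x,y)$ satisfies the system $S_{\lambda_a,\lambda_b}$ if $x\mid y^3+y^{\lambda_a}+1$ and $y\mid x^3+x^{\lambda_b}+1$. For such a pair, $\langle x,y\rangle_{S_{\lambda_a,\lambda_b}}$ denotes the bi-infinite integer sequence $(u_n)$ with $u_0=x$, $u_1=y$ and $u_{n-1}u_{n+1}=u_n^3+u_n^{e_n}+1$ for all $n$, where $e_n$ has period 4 with $(e_0,e_1,e_2,e_3)=(\lambda_b,\lambda_a,3-\lambda_b,3-\lambda_a)$; sequences are identified up to shift and reversal of indices. "$u,t,s$, in that order, are three consecutive terms of $\langle u,t\rangle_{S_{\lambda_a,\lambda_b}}$" means $(u,t)$ satisfies $S_{\lambda_a,\lambda_b}$ and $us=t^3+t^{\lambda_a}+1$; in that case $(t,s)$ satisfies $S_{3-\lambda_b,\lambda_a}$ and the same chain is denoted $\langle t,s\rangle_{S_{3-\lambda_b,\lambda_a}}$. *)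

theory Defs
  imports "HOL-Computational_Algebra.Primes"
begin

definition satS :: "nat \<Rightarrow> nat \<Rightarrow> int \<Rightarrow> int \<Rightarrow> bool" where
  "satS la lb x y \<longleftrightarrow> x dvd y ^ 3 + y ^ la + 1 \<and> y dvd x ^ 3 + x ^ lb + 1"

definition consec3 :: "nat \<Rightarrow> nat \<Rightarrow> int \<Rightarrow> int \<Rightarrow> int \<Rightarrow> bool" where
  "consec3 la lb u t s \<longleftrightarrow> satS la lb u t \<and> u * s = t ^ 3 + t ^ la + 1"

end

theory Submission
  imports Defs
begin

lemma key:
  fixes t u v w r g :: int and lb :: nat
  defines "f \<equiv> \<lambda>x::int. x ^ 3 + x ^ lb + 1"
  assumes p: "prime \<bar>t\<bar>"
    and fu: "t dvd f u" and fv: "t dvd f v" and nd: "\<not> t dvd (u - v)"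
    and N: "t dvd u * v * w - 1"
    and gdef: "f u - f v = (u - v) * g"
    and r1: "u * v * r + 1 = f v - v * g"
    and fr: "\<exists>c. f r = c * g - f u - f v + 3 * (u * v * r + 1)"
  shows "t dvd f (- w)"
proof -
  have pt: "prime_elem t" using p by simp
  have "t dvd (u - v) * g" using fu fv gdef by (metis dvd_diff)
  hence tg: "t dvd g" using pt nd prime_elem_dvd_mult_iff by blast
  have tr1: "t dvd u * v * r + 1" using r1 fv tg by (simp add: dvd_diff)
  obtain c where c: "f r = c * g - f u - f v + 3 * (u * v * r + 1)" using fr by blast
  have "t dvd c * g - f u - f v + 3 * (u * v * r + 1)"
    by (intro dvd_add dvd_diff dvd_mult tg fu fv tr1)
  hence tfr: "t dvd f r" using c by simp
  have "t dvd (u * v) * (w + r)" using dvd_add[OF N tr1] by (simp add: algebra_simps)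
  moreover have "\<not> t dvd u * v"
  proof
    assume "t dvd u * v"
    hence "t dvd u * v * w" by simp
    hence "t dvd u * v * w - (u * v * w - 1)" using N by (rule dvd_diff)
    hence "t dvd 1" by simp
    with pt show False by (simp add: prime_elem_def)
  qed
  ultimately have "t dvd w + r" using pt prime_elem_dvd_mult_iff by blast
  hence "t dvd - (w + r)" by (simp only: dvd_minus_iff)
  moreover have "- (w + r) = (- w) - r" by simp
  ultimately have "t dvd (- w) - r" by metis
  hence h: "(- w) mod t = r mod t" by (simp add: mod_eq_dvd_iff)
  have a: "(- w) ^ n mod t = r ^ n mod t" for n by (metis h power_mod)
  have "f (- w) mod t = f r mod t" unfolding f_def
    by (rule mod_add_cong[OF mod_add_cong[OF a a] refl])
  thus ?thesis using tfr by (simp add: dvd_eq_mod_eq_0)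
qed

theorem mainTheorem16:
  fixes la lb :: nat and u t v w :: int
  assumes "la \<in> {1, 2}" and "lb \<in> {1, 2}"
    and "consec3 la lb u t (v * w)"
    and "consec3 la lb v t (u * w)"
    and "prime \<bar>t\<bar>"
    and "\<not> t dvd (u - v)"
  shows "satS la lb (- w) t \<and> consec3 la lb (- w) t (- (u * v))"
proof -
  have e: "u * (v * w) = t ^ 3 + t ^ la + 1" and fu: "t dvd u ^ 3 + u ^ lb + 1"
    and fv: "t dvd v ^ 3 + v ^ lb + 1"
    using assms(3,4) unfolding consec3_def satS_def by auto
  have e2: "(- w) * (- (u * v)) = t ^ 3 + t ^ la + 1" using e by (simp add: algebra_simps)
  have "t dvd t ^ 3 + t ^ la" using assms(1) by auto
  hence N: "t dvd u * v * w - 1" using e by (simp add: algebra_simps)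
  have "t dvd (- w) ^ 3 + (- w) ^ lb + 1"
  proof (cases "lb = 1")
    case True
    hence lb: "lb = 1" .
    have k: "t dvd (\<lambda>x::int. x ^ 3 + x ^ 1 + 1) (- w)"
    proof (rule key[OF assms(5) _ _ assms(6) N, where g="u^2+u*v+v^2+1" and r="-u-v"])
      show "t dvd u ^ 3 + u ^ 1 + 1" using fu lb by simp
      show "t dvd v ^ 3 + v ^ 1 + 1" using fv lb by simp
      show "u ^ 3 + u ^ 1 + 1 - (v ^ 3 + v ^ 1 + 1) = (u - v) * (u^2+u*v+v^2+1)"
        by (simp add: algebra_simps power2_eq_square power3_eq_cube)
      show "u * v * (-u-v) + 1 = v ^ 3 + v ^ 1 + 1 - v * (u^2+u*v+v^2+1)"
        by (simp add: algebra_simps power2_eq_square power3_eq_cube)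
      show "\<exists>c. (-u-v) ^ 3 + (-u-v) ^ 1 + 1 = c * (u^2+u*v+v^2+1) - (u ^ 3 + u ^ 1 + 1) - (v ^ 3 + v ^ 1 + 1) + 3 * (u * v * (-u-v) + 1)"
        by (rule exI[of _ "0"]) (simp add: algebra_simps power2_eq_square power3_eq_cube)
    qed
    thus ?thesis using lb by simp
  next
    case False
    hence lb: "lb = 2" using assms(2) by auto
    have k: "t dvd (\<lambda>x::int. x ^ 3 + x ^ 2 + 1) (- w)"
    proof (rule key[OF assms(5) _ _ assms(6) N, where g="u^2+u*v+v^2+u+v" and r="-1-u-v"])
      show "t dvd u ^ 3 + u ^ 2 + 1" using fu lb by simp
      show "t dvd v ^ 3 + v ^ 2 + 1" using fv lb by simp
      show "u ^ 3 + u ^ 2 + 1 - (v ^ 3 + v ^ 2 + 1) = (u - v) * (u^2+u*v+v^2+u+v)"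
        by (simp add: algebra_simps power2_eq_square power3_eq_cube)
      show "u * v * (-1-u-v) + 1 = v ^ 3 + v ^ 2 + 1 - v * (u^2+u*v+v^2+u+v)"
        by (simp add: algebra_simps power2_eq_square power3_eq_cube)
      show "\<exists>c. (-1-u-v) ^ 3 + (-1-u-v) ^ 2 + 1 = c * (u^2+u*v+v^2+u+v) - (u ^ 3 + u ^ 2 + 1) - (v ^ 3 + v ^ 2 + 1) + 3 * (u * v * (-1-u-v) + 1)"
        by (rule exI[of _ "-1"]) (simp add: algebra_simps power2_eq_square power3_eq_cube)
    qed
    thus ?thesis using lb by simp
  qed
  moreover have "(- w) dvd t ^ 3 + t ^ la + 1" using e2 by (metis dvd_triv_left)
  ultimately show ?thesis using e2 unfolding consec3_def satS_def by auto
qed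

end
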